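(* For all integers $n\ge2$ and $0\le m\le n-1$, define $$\mathcal{K}_{n,m}=-\binom{n}{2}\binom{n}{m}\binom{n-2}{m}-\binom{n}{2}\sum_{k=1}^{m}(-1)^k\Big(\binom{n}{m+k}\binom{n-2}{m-k}+\binom{n}{m-k}\binom{n-2}{m+k}\Big)+\frac{2n-2m-1}{2}\sum_{k=0}^{m}(-1)^k(1+2k)\binom{n}{m+1+k}\binom{n}{m-k}.$$ Then $\mathcal{K}_{n,m}=\dfrac{n^2}{2}\binom{n-1}{m}$.
   Context: $\binom{j}{k}=\frac{j!}{k!(j-k)!}$ if $0\le k\le j$ and $\binom{j}{k}=0$ otherwise (for all integers $j,k$). *)

theory Defs
  imports Complex_Main
begin

definition K :: "nat \<Rightarrow> nat \<Rightarrow> real" where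
  "K n m =
     - real (n choose 2) * real (n choose m) * real ((n - 2) choose m)
     - real (n choose 2) * (\<Sum>k=1..m. (-1)^k *
          (real (n choose (m + k)) * real ((n - 2) choose (m - k))
           + real (n choose (m - k)) * real ((n - 2) choose (m + k))))
     + (2 * real n - 2 * real m - 1) / 2 *
       (\<Sum>k=0..m. (-1)^k * (1 + 2 * real k) * real (n choose (m + 1 + k)) * real (n choose (m - k)))"

end

theory Submission
  imports Defs "HOL-Computational_Algebra.Polynomial"
begin

lemma lin_pow: "coeff ([:1, c:] ^ n) i = of_nat (n choose i) * (c::real) ^ i"
proof (cases "i \<le> n")
  case True thus ?thesis by (simp add: coeff_linear_poly_power)
next
  case False
  have "degree ([:1, c:] ^ n) \<le> n"
  proof -
    have "degree ([:1, c:] ^ n) \<le> degree [:1, c:] * n" by (rule degree_power_le)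
    moreover have "degree [:1, c:] \<le> 1" by simp
    ultimately show ?thesis by (metis mult_le_mono1 mult_1 order_trans)
  qed
  hence "coeff ([:1, c:] ^ n) i = 0" using False by (intro coeff_eq_0) auto
  thus ?thesis using False by simp
qed

lemma Q_pow: "coeff ([:1, 0, -1:] ^ q) j =
   (if even j then (-1::real)^(j div 2) * of_nat (q choose (j div 2)) else 0)"
proof -
  have "[:1, 0, -1:] = monom (-1::real) 2 + [:1:]"
    by (simp add: monom_altdef numeral_2_eq_2)
  hence "coeff ([:1, 0, -1:] ^ q) j = coeff ((monom (-1::real) 2 + [:1:])^q) j" by simp
  also have "\<dots> = (\<Sum>k\<le>q. of_nat (q choose k) * (if 2*k = j then (-1)^k else 0))"
    by (subst binomial_ring) (simp add: coeff_sum of_nat_poly monom_power poly_const_pow mult_ac)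
  also have "\<dots> = (if even j then (-1::real)^(j div 2) * of_nat (q choose (j div 2)) else 0)"
  proof (cases "even j")
    case True
    then obtain m where j: "j = 2*m" by auto
    show ?thesis
    proof (cases "m \<le> q")
      case True
      have "(\<Sum>k\<le>q. of_nat (q choose k) * (if 2*k = j then (-1::real)^k else 0))
          = (\<Sum>k\<in>{m}. of_nat (q choose k) * (if 2*k = j then (-1)^k else 0))"
        using True j by (intro sum.mono_neutral_cong_right) auto
      thus ?thesis using j by simp
    next
      case False
      have "(\<Sum>k\<le>q. of_nat (q choose k) * (if 2*k = j then (-1::real)^k else 0)) = 0"
        using False j by (intro sum.neutral) auto
      thus ?thesis using j False by simp
    qed
  next
    case False
    thus ?thesis by (intro trans[OF sum.neutral]) auto
  qed
  finally show ?thesis .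
qed

lemma split_even: fixes g :: "nat \<Rightarrow> real" shows "(\<Sum>i=0..2*m. g i) = g m + (\<Sum>k=1..m. g (m+k) + g (m-k))"
proof (induction m arbitrary: g)
  case 0 thus ?case by simp
next
  case (Suc m)
  have e: "2*Suc m = Suc (Suc (2*m))" by simp
  have e3: "Suc (Suc (2*m)) = 2*m+2" by simp
  have "(\<Sum>i=0..2*Suc m. g i) = (\<Sum>i=0..Suc (2*m). g i) + g (2*m+2)"
    by (subst e, subst sum.atLeast0_atMost_Suc, simp only: e3)
  also have "(\<Sum>i=0..Suc (2*m). g i) = g 0 + (\<Sum>i=0..2*m. g (Suc i))"
    by (simp only: sum.atLeast0_atMost_Suc_shift o_def)
  finally have "(\<Sum>i=0..2*Suc m. g i) = g 0 + (\<Sum>i=0..2*m. g (Suc i)) + g (2*m+2)" by (simp only:)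
  also have "(\<Sum>i=0..2*m. g (Suc i)) = g (Suc m) + (\<Sum>k=1..m. g (Suc m+k) + g (Suc m-k))"
  proof -
    have "(\<Sum>i=0..2*m. g (Suc i)) = g (Suc m) + (\<Sum>k=1..m. g (Suc (m+k)) + g (Suc (m-k)))"
      using Suc[of "\<lambda>i. g (Suc i)"] by simp
    also have "(\<Sum>k=1..m. g (Suc (m+k)) + g (Suc (m-k))) = (\<Sum>k=1..m. g (Suc m+k) + g (Suc m-k))"
      by (intro sum.cong) (auto simp: Suc_diff_le)
    finally show ?thesis .
  qed
  finally have A: "(\<Sum>i=0..2*Suc m. g i) = g 0 + (g (Suc m) + (\<Sum>k=1..m. g (Suc m+k) + g (Suc m-k))) + g (2*m+2)" .
  have B: "(\<Sum>k=1..Suc m. g (Suc m+k) + g (Suc m-k)) = (\<Sum>k=1..m. g (Suc m+k) + g (Suc m-k)) + (g (2*m+2) + g 0)"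
    by (simp add: sum.cl_ivl_Suc mult_2)
  show ?case using A B by linarith
qed

lemma split_odd: fixes g :: "nat \<Rightarrow> real" shows "(\<Sum>i=0..2*m+1. g i) = (\<Sum>k=0..m. g (m-k) + g (m+1+k))"
proof (induction m arbitrary: g)
  case 0 thus ?case by simp
next
  case (Suc m)
  have e: "2*Suc m+1 = Suc (Suc (2*m+1))" by simp
  have e3: "Suc (Suc (2*m+1)) = 2*m+3" by simp
  have "(\<Sum>i=0..2*Suc m+1. g i) = (\<Sum>i=0..Suc (2*m+1). g i) + g (2*m+3)"
    by (subst e, subst sum.atLeast0_atMost_Suc, simp only: e3)
  also have "(\<Sum>i=0..Suc (2*m+1). g i) = g 0 + (\<Sum>i=0..2*m+1. g (Suc i))"
    by (simp only: sum.atLeast0_atMost_Suc_shift o_def)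
  finally have "(\<Sum>i=0..2*Suc m+1. g i) = g 0 + (\<Sum>i=0..2*m+1. g (Suc i)) + g (2*m+3)" by (simp only:)
  also have "(\<Sum>i=0..2*m+1. g (Suc i)) = (\<Sum>k=0..m. g (Suc m - k) + g (Suc m+1+k))"
  proof -
    have "(\<Sum>i=0..2*m+1. g (Suc i)) = (\<Sum>k=0..m. g (Suc (m-k)) + g (Suc (m+1+k)))"
      using Suc[of "\<lambda>i. g (Suc i)"] by simp
    also have "\<dots> = (\<Sum>k=0..m. g (Suc m - k) + g (Suc m+1+k))"
      by (intro sum.cong) (auto simp: Suc_diff_le)
    finally show ?thesis .
  qed
  finally have A: "(\<Sum>i=0..2*Suc m+1. g i) = g 0 + (\<Sum>k=0..m. g (Suc m - k) + g (Suc m+1+k)) + g (2*m+3)" .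
  have B: "(\<Sum>k=0..Suc m. g (Suc m - k) + g (Suc m+1+k)) = (\<Sum>k=0..m. g (Suc m - k) + g (Suc m+1+k)) + (g 0 + g (2*m+3))"
    by (simp add: sum.atLeast0_atMost_Suc mult_2 eval_nat_numeral)
  show ?case using A B by linarith
qed

definition cf :: "nat \<Rightarrow> nat \<Rightarrow> nat \<Rightarrow> real" where
  "cf a b j = (\<Sum>i=0..j. (-1)^i * real (a choose i) * real (b choose (j-i)))"

lemma cf_coeff: "cf a b j = coeff ([:1,-1:]^a * [:1,1:]^b) j"
  unfolding cf_def coeff_mult lin_pow atMost_atLeast0 by (intro sum.cong refl) (simp add: mult_ac)

lemma Qfact: "[:1,-1:]^a * [:1,1:]^a = ([:1,0,-1:] ^ a :: real poly)"
proof -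
  have "[:1,-1:] * [:1,1:] = ([:1,0,-1:] :: real poly)" by simp
  thus ?thesis by (metis power_mult_distrib)
qed

lemma coeff_lin: "coeff (p * [:1,c:]) j = coeff p j + (if j = 0 then 0 else (c::real) * coeff p (j-1))"
proof -
  have "[:1,c:] = 1 + monom c 1" by (simp add: monom_altdef one_pCons)
  hence "p * [:1,c:] = p + monom c 1 * p" by (simp add: algebra_simps)
  thus ?thesis by (simp add: coeff_monom_mult)
qed

lemma cQ_even: "coeff ([:1, 0, -1:] ^ q) (2*m) = (-1::real)^m * real (q choose m)"
  by (simp add: Q_pow)

lemma cQ_odd: "coeff ([:1, 0, -1:] ^ q) (2*m+1) = (0::real)"
  by (simp add: Q_pow)

lemma neg_pow_diff: "k \<le> m \<Longrightarrow> (-1::real)^(m-k) = (-1)^(m+k)"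
  by (auto simp: minus_one_power_iff)

lemma T_sum:
  "real (n choose m) * real ((n-2) choose m) + (\<Sum>k=1..m. (-1)^k *
          (real (n choose (m + k)) * real ((n - 2) choose (m - k))
           + real (n choose (m - k)) * real ((n - 2) choose (m + k))))
   = (-1)^m * cf n (n-2) (2*m)"
proof -
  let ?g = "\<lambda>i. (-1::real)^i * real (n choose i) * real ((n-2) choose (2*m-i))"
  have "cf n (n-2) (2*m) = ?g m + (\<Sum>k=1..m. ?g (m+k) + ?g (m-k))"
    unfolding cf_def by (rule split_even)
  also have "(\<Sum>k=1..m. ?g (m+k) + ?g (m-k)) = (\<Sum>k=1..m. (-1)^m * ((-1)^k *
          (real (n choose (m + k)) * real ((n - 2) choose (m - k))
           + real (n choose (m - k)) * real ((n - 2) choose (m + k)))))"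
  proof (intro sum.cong refl)
    fix k assume "k \<in> {1..m}"
    hence km: "k \<le> m" by simp
    have e1: "2*m - (m+k) = m - k" "2*m - (m-k) = m+k" using km by auto
    show "?g (m+k) + ?g (m-k) = (-1)^m * ((-1)^k *
          (real (n choose (m + k)) * real ((n - 2) choose (m - k))
           + real (n choose (m - k)) * real ((n - 2) choose (m + k))))"
      unfolding e1 neg_pow_diff[OF km] by (simp add: power_add algebra_simps)
  qed
  also have "\<dots> = (-1)^m * (\<Sum>k=1..m. (-1)^k *
          (real (n choose (m + k)) * real ((n - 2) choose (m - k))
           + real (n choose (m - k)) * real ((n - 2) choose (m + k))))"
    by (simp add: sum_distrib_left)
  finally have "cf n (n-2) (2*m) = (-1)^m * (real (n choose m) * real ((n-2) choose m) + (\<Sum>k=1..m. (-1)^k *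
          (real (n choose (m + k)) * real ((n - 2) choose (m - k))
           + real (n choose (m - k)) * real ((n - 2) choose (m + k)))))"
    by (simp add: algebra_simps)
  hence "(-1)^m * cf n (n-2) (2*m) = ((-1)^m * (-1)^m) * (real (n choose m) * real ((n-2) choose m) + (\<Sum>k=1..m. (-1)^k *
          (real (n choose (m + k)) * real ((n - 2) choose (m - k))
           + real (n choose (m - k)) * real ((n - 2) choose (m + k)))))"
    by simp
  thus ?thesis by (simp add: power_add[symmetric])
qed

lemma T_val:
  assumes "n \<ge> 2"
  shows "(-1)^m * cf n (n-2) (2*m) = real ((n-2) choose m) - (if m = 0 then 0 else real ((n-2) choose (m-1)))"
proof -
  define q where "q = n - 2"
  have n: "n = q + 2" using assms q_def by simp
  have "[:1,-1:]^n * [:1,1:]^(n-2) = ([:1,-1:]^q * [:1,1:]^q) * [:1,-1:] * ([:1,-1:] :: real poly)"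
    unfolding n by (simp add: power_add power2_eq_square algebra_simps)
  hence "cf n (n-2) (2*m) = coeff ([:1,0,-1:]^q * [:1,-1:] * [:1,-1:]) (2*m)"
    by (simp add: cf_coeff Qfact)
  also have "\<dots> = (-1)^m * real (q choose m) + (if m = 0 then 0 else (-1)^(m-1) * real (q choose (m-1)))"
  proof (cases m)
    case 0 thus ?thesis by (simp add: coeff_lin Q_pow)
  next
    case (Suc m')
    have a: "2*m - 1 = 2*m'+1" "2*m-1-1 = 2*m'" using Suc by auto
    show ?thesis unfolding coeff_lin a using Suc by (simp add: Q_pow)
  qed
  finally have cfv: "cf n (n-2) (2*m) = (-1)^m * real (q choose m) + (if m = 0 then 0 else (-1)^(m-1) * real (q choose (m-1)))" .
  show ?thesis
  proof (cases m)
    case 0 with cfv show ?thesis unfolding q_def by simp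
  next
    case (Suc m')
    have sq: "(-1::real)^m' * (-1)^m' = 1" by (simp add: power_add[symmetric] minus_one_power_iff)
    have "(-1)^m * cf n (n-2) (2*m) = ((-1)^m'*(-1)^m') * real (q choose m) - ((-1)^m'*(-1)^m') * real (q choose (m-1))"
      unfolding cfv using Suc by (simp add: algebra_simps)
    thus ?thesis unfolding sq q_def using Suc by simp
  qed
qed

lemma absorb_real: "real j * real (Suc p choose j) = (if j = 0 then 0 else real (Suc p) * real (p choose (j-1)))"
proof (cases j)
  case 0 thus ?thesis by simp
next
  case (Suc k)
  have "Suc k * (Suc p choose Suc k) = Suc p * (p choose k)" by (rule Suc_times_binomial)
  hence "real (Suc k * (Suc p choose Suc k)) = real (Suc p * (p choose k))" by (simp only:)
  thus ?thesis using Suc by (simp only: of_nat_mult) simp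
qed

lemma S2_split:
  "(\<Sum>i=0..2*m+1. (-1::real)^i * (real (2*m+1) - 2 * real i) * real (n choose i) * real (n choose (2*m+1-i)))
   = 2 * (-1)^m * (\<Sum>k=0..m. (-1)^k * (1 + 2 * real k) * real (n choose (m + 1 + k)) * real (n choose (m - k)))"
proof -
  let ?g = "\<lambda>i. (-1::real)^i * (real (2*m+1) - 2 * real i) * real (n choose i) * real (n choose (2*m+1-i))"
  have "(\<Sum>i=0..2*m+1. ?g i) = (\<Sum>k=0..m. ?g (m-k) + ?g (m+1+k))" by (rule split_odd)
  also have "\<dots> = (\<Sum>k=0..m. 2 * (-1)^m * ((-1)^k * (1 + 2 * real k) * real (n choose (m + 1 + k)) * real (n choose (m - k))))"
  proof (intro sum.cong refl)
    fix k assume "k \<in> {0..m}"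
    hence km: "k \<le> m" by simp
    have e1: "2*m+1 - (m-k) = m+1+k" "2*m+1 - (m+1+k) = m-k" using km by auto
    have e2: "real (2*m+1) - 2 * real (m-k) = 1 + 2 * real k" using km by (simp add: of_nat_diff)
    have e3: "real (2*m+1) - 2 * real (m+1+k) = - (1 + 2 * real k)" by simp
    have e4: "(-1::real)^(m+1+k) = - ((-1)^m * (-1)^k)" by (simp add: power_add)
    show "?g (m-k) + ?g (m+1+k) = 2 * (-1)^m * ((-1)^k * (1 + 2 * real k) * real (n choose (m + 1 + k)) * real (n choose (m - k)))"
      unfolding e1 e2 e3 e4 neg_pow_diff[OF km] by (simp add: power_add algebra_simps)
  qed
  also have "\<dots> = 2 * (-1)^m * (\<Sum>k=0..m. (-1)^k * (1 + 2 * real k) * real (n choose (m + 1 + k)) * real (n choose (m - k)))"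
    by (simp add: sum_distrib_left)
  finally show ?thesis .
qed

lemma S2_terms_gen:
  fixes A B :: "nat \<Rightarrow> real"
  assumes "i \<le> 2*m+1" and ab: "\<And>j. real j * A j = (if j = 0 then 0 else c * B (j-1))"
  shows "(-1::real)^i * (real (2*m+1) - 2 * real i) * A i * A (2*m+1-i)
    = c * ((if i \<le> 2*m then (-1)^i * A i * B (2*m-i) else 0)
         - (if 1 \<le> i then (-1)^i * B (i-1) * A (2*m+1-i) else 0))"
proof -
  let ?j = "2*m+1-i"
  have eq: "real (2*m+1) - 2 * real i = real ?j - real i" using assms by (simp add: of_nat_diff)
  have "(-1::real)^i * (real (2*m+1) - 2 * real i) * A i * A ?j
     = (-1)^i * (A i * (real ?j * A ?j) - A ?j * (real i * A i))"
    unfolding eq by (simp only: algebra_simps)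
  also have "\<dots> = (-1)^i * (A i * (if ?j = 0 then 0 else c * B (?j-1))
       - A ?j * (if i = 0 then 0 else c * B (i-1)))"
    by (simp only: ab)
  also have "\<dots> = c * ((if i \<le> 2*m then (-1)^i * A i * B (2*m-i) else 0)
         - (if 1 \<le> i then (-1)^i * B (i-1) * A (2*m+1-i) else 0))"
  proof -
    have "i = 0 \<or> i = 2*m+1 \<or> (1 \<le> i \<and> i \<le> 2*m)" using assms by auto
    moreover have "?j - 1 = 2*m - i" by simp
    ultimately show ?thesis
    proof (elim disjE)
      assume "i = 0" thus ?thesis by (simp add: algebra_simps)
    next
      assume i: "i = 2*m+1" thus ?thesis by (simp add: algebra_simps)
    next
      assume i: "1 \<le> i \<and> i \<le> 2*m"
      hence j: "?j \<noteq> 0" "i \<noteq> 0" by auto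
      show ?thesis using i j by (simp add: algebra_simps)
    qed
  qed
  finally show ?thesis .
qed

lemma S2_terms:
  assumes "i \<le> 2*m+1"
  shows "(-1::real)^i * (real (2*m+1) - 2 * real i) * real (Suc p choose i) * real (Suc p choose (2*m+1-i))
    = real (Suc p) * ((if i \<le> 2*m then (-1)^i * real (Suc p choose i) * real (p choose (2*m-i)) else 0)
         - (if 1 \<le> i then (-1)^i * real (p choose (i-1)) * real (Suc p choose (2*m+1-i)) else 0))"
  by (rule S2_terms_gen[OF assms, where A = "\<lambda>i. real (Suc p choose i)" and B = "\<lambda>i. real (p choose i)"])
     (rule absorb_real)

lemma S2_val:
  "(\<Sum>i=0..2*m+1. (-1::real)^i * (real (2*m+1) - 2 * real i) * real (Suc p choose i) * real (Suc p choose (2*m+1-i)))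
   = real (Suc p) * (cf (Suc p) p (2*m) + cf p (Suc p) (2*m))"
proof -
  let ?a = "\<lambda>i. (if i \<le> 2*m then (-1::real)^i * real (Suc p choose i) * real (p choose (2*m-i)) else 0)"
  let ?b = "\<lambda>i. (if 1 \<le> i then (-1::real)^i * real (p choose (i-1)) * real (Suc p choose (2*m+1-i)) else 0)"
  have "(\<Sum>i=0..2*m+1. (-1::real)^i * (real (2*m+1) - 2 * real i) * real (Suc p choose i) * real (Suc p choose (2*m+1-i)))
     = (\<Sum>i=0..2*m+1. real (Suc p) * (?a i - ?b i))"
    by (intro sum.cong refl S2_terms) simp
  also have "\<dots> = real (Suc p) * ((\<Sum>i=0..2*m+1. ?a i) - (\<Sum>i=0..2*m+1. ?b i))"
    by (simp only: sum_subtractf[symmetric] sum_distrib_left)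
  also have "(\<Sum>i=0..2*m+1. ?a i) = cf (Suc p) p (2*m)"
  proof -
    have "(\<Sum>i=0..2*m+1. ?a i) = (\<Sum>i=0..2*m. ?a i) + ?a (Suc (2*m))"
      by (simp only: Suc_eq_plus1[symmetric] sum.atLeast0_atMost_Suc)
    also have "\<dots> = (\<Sum>i=0..2*m. ?a i)" by simp
    also have "\<dots> = cf (Suc p) p (2*m)" unfolding cf_def by (intro sum.cong refl) auto
    finally show ?thesis .
  qed
  also have "(\<Sum>i=0..2*m+1. ?b i) = - cf p (Suc p) (2*m)"
  proof -
    have "(\<Sum>i=0..2*m+1. ?b i) = ?b 0 + (\<Sum>i=0..2*m. ?b (Suc i))"
      by (simp only: Suc_eq_plus1[symmetric] sum.atLeast0_atMost_Suc_shift o_def)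
    also have "\<dots> = (\<Sum>i=0..2*m. - ((-1::real)^i * real (p choose i) * real (Suc p choose (2*m-i))))"
      by (simp del: sum.cl_ivl_Suc)
    also have "\<dots> = - cf p (Suc p) (2*m)" unfolding cf_def by (simp add: sum_negf)
    finally show ?thesis .
  qed
  finally show ?thesis by simp
qed

lemma cf_val1: "cf (Suc p) p (2*m) = (-1)^m * real (p choose m)"
proof -
  have "[:1,-1:]^(Suc p) * [:1,1:]^p = ([:1,-1:]^p * [:1,1:]^p) * ([:1,-1:] :: real poly)"
    by (simp add: algebra_simps)
  hence "cf (Suc p) p (2*m) = coeff ([:1,0,-1:]^p * [:1,-1:]) (2*m)"
    by (simp add: cf_coeff Qfact)
  also have "\<dots> = (-1)^m * real (p choose m)"
  proof (cases m)
    case 0 thus ?thesis by (simp add: coeff_lin Q_pow)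
  next
    case (Suc m')
    have a: "2*m - 1 = 2*m'+1" using Suc by auto
    show ?thesis unfolding coeff_lin a using Suc by (simp add: Q_pow)
  qed
  finally show ?thesis .
qed

lemma cf_val2: "cf p (Suc p) (2*m) = (-1)^m * real (p choose m)"
proof -
  have "[:1,-1:]^p * [:1,1:]^(Suc p) = ([:1,-1:]^p * [:1,1:]^p) * ([:1,1:] :: real poly)"
    by (simp add: algebra_simps)
  hence "cf p (Suc p) (2*m) = coeff ([:1,0,-1:]^p * [:1,1:]) (2*m)"
    by (simp add: cf_coeff Qfact)
  also have "\<dots> = (-1)^m * real (p choose m)"
  proof (cases m)
    case 0 thus ?thesis by (simp add: coeff_lin Q_pow)
  next
    case (Suc m')
    have a: "2*m - 1 = 2*m'+1" using Suc by auto
    show ?thesis unfolding coeff_lin a using Suc by (simp add: Q_pow)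
  qed
  finally show ?thesis .
qed

lemma alg_aux: "(s::real) * s = 1 \<Longrightarrow> 2 * s * X = c * (s * Y + s * Y) \<Longrightarrow> X = c * Y"
proof -
  assume a: "s * s = 1" and b: "2 * s * X = c * (s * Y + s * Y)"
  hence "s * (2 * s * X) = s * (c * (s * Y + s * Y))" by simp
  hence "2 * (s*s) * X = 2 * (s*s) * (c*Y)" by (simp add: algebra_simps)
  thus ?thesis using a by simp
qed

lemma S2_closed:
  "(\<Sum>k=0..m. (-1)^k * (1 + 2 * real k) * real (Suc p choose (m + 1 + k)) * real (Suc p choose (m - k)))
    = real (Suc p) * real (p choose m)"
proof (rule alg_aux)
  show "(-1::real)^m * (-1)^m = 1" by (simp add: power_add[symmetric] minus_one_power_iff)
  show "2 * (-1)^m * (\<Sum>k=0..m. (-1)^k * (1 + 2 * real k) * real (Suc p choose (m + 1 + k)) * real (Suc p choose (m - k)))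
     = real (Suc p) * ((-1)^m * real (p choose m) + (-1)^m * real (p choose m))"
    using S2_split[of m "Suc p"] S2_val[of m p] cf_val1[of p m] cf_val2[of p m] by metis
qed

lemma final_alg:
  fixes N M A B Bm C2 S E :: real
  assumes "(N - 1 - M) * A = (N - 1) * B" "M * A = (N - 1) * Bm" "2 * C2 = N * (N - 1)"
    "E = B - Bm" "S = N * A" "N - 1 > 0"
  shows "- C2 * E + (2 * N - 2 * M - 1) / 2 * S = N ^ 2 / 2 * A"
proof -
  have "(N - 1) * E = (N - 1) * B - (N - 1) * Bm" unfolding assms(4) by (simp add: algebra_simps)
  also have "\<dots> = (N - 1 - M) * A - M * A" using assms(1,2) by simp
  also have "\<dots> = (N - 1 - 2*M) * A" by (simp add: algebra_simps)
  finally have "(N - 1) * E = (N - 1 - 2*M) * A" .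
  hence "2 * C2 * E = N * ((N - 1 - 2*M) * A)" using assms(3) by (metis mult.assoc mult.commute)
  thus ?thesis using assms(5) by (simp add: field_simps power2_eq_square)
qed

theorem proposition2p1:
  fixes n m :: nat
  assumes "n \<ge> 2" and "m \<le> n - 1"
  shows "K n m = real n ^ 2 / 2 * real ((n - 1) choose m)"
proof -
  obtain p where n: "n = Suc (Suc p)" using assms(1) by (metis add_2_eq_Suc le_Suc_ex)
  let ?E = "real (n choose m) * real ((n-2) choose m) + (\<Sum>k=1..m. (-1)^k *
          (real (n choose (m + k)) * real ((n - 2) choose (m - k))
           + real (n choose (m - k)) * real ((n - 2) choose (m + k))))"
  let ?S = "(\<Sum>k=0..m. (-1)^k * (1 + 2 * real k) * real (n choose (m + 1 + k)) * real (n choose (m - k)))"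
  have K1: "K n m = - real (n choose 2) * ?E + (2 * real n - 2 * real m - 1) / 2 * ?S"
    unfolding K_def by (simp add: algebra_simps)
  have E: "?E = real ((n-2) choose m) - (if m = 0 then 0 else real ((n-2) choose (m-1)))"
    using T_sum[of n m] T_val[OF assms(1), of m] by simp
  have S: "?S = real n * real ((n-1) choose m)"
    unfolding n diff_Suc_1 by (rule S2_closed)
  have nn: "real (n - 1) = real n - 1" "n - 1 = Suc p" "n - 2 = p" using assms(1) n by auto
  have h1: "(real n - 1 - real m) * real ((n-1) choose m) = (real n - 1) * real ((n-2) choose m)"
  proof -
    have "(Suc p - m) * (Suc p choose m) = Suc p * ((Suc p - 1) choose m)" by (rule binomial_absorb_comp)
    hence "real ((Suc p - m) * (Suc p choose m)) = real (Suc p * (p choose m))" by simp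
    hence "(real (Suc p) - real m) * real (Suc p choose m) = real (Suc p) * real (p choose m)"
      using assms(2) n by (simp only: of_nat_mult of_nat_diff)
    thus ?thesis unfolding nn(2,3) nn(1)[symmetric] .
  qed
  have h2: "real m * real ((n-1) choose m) = (real n - 1) * (if m = 0 then 0 else real ((n-2) choose (m-1)))"
    using absorb_real[of m p] unfolding nn(2,3) nn(1)[symmetric] by simp
  have h3: "2 * real (n choose 2) = real n * (real n - 1)"
  proof -
    have "Suc 1 * (n choose Suc 1) = n * ((n - 1) choose 1)" by (rule binomial_absorption)
    hence "real (2 * (n choose 2)) = real (n * (n-1))" by (simp add: numeral_2_eq_2)
    thus ?thesis using assms(1) by (simp add: of_nat_diff)
  qed
  have "K n m = - real (n choose 2) * (real ((n-2) choose m) - (if m = 0 then 0 else real ((n-2) choose (m-1))))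
      + (2 * real n - 2 * real m - 1) / 2 * (real n * real ((n-1) choose m))"
    by (simp only: K1 E S)
  also have "\<dots> = real n ^ 2 / 2 * real ((n-1) choose m)"
    by (rule final_alg[OF h1 h2 h3 refl refl]) (use assms(1) in simp)
  finally show ?thesis .
qed

end
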